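(* Let $d\geq 1$, $p\in[1,\infty)\setminus\{2\}$, and let $\bm{Q}_1,\bm{Q}_2$ be $d\times d$ symmetric positive definite matrices. For $\beta>0$ let $\bm{Q}(\beta)=\left(1+\frac{1}{\beta}\right)^{1/p}\bm{Q}_1+(1+\beta)^{1/p}\bm{Q}_2$. Then the function $\beta\mapsto\mathrm{trace}(\bm{Q}(\beta))$ on $(0,\infty)$ is minimized at $$\beta^*_{\mathrm{tr}}=\left(\frac{\mathrm{trace}(\bm{Q}_1)}{\mathrm{trace}(\bm{Q}_2)}\right)^{\frac{p}{1+p}}.$$ *)

theory Defs
  imports "HOL-Analysis.Analysis"
begin

definition sym_pos_def_mat :: "real^'n^'n \<Rightarrow> bool" where
  "sym_pos_def_mat A \<longleftrightarrow> transpose A = A \<and> (\<forall>x. x \<noteq> 0 \<longrightarrow> x \<bullet> (A *v x) > 0)"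

definition Qmat :: "real \<Rightarrow> real^'n^'n \<Rightarrow> real^'n^'n \<Rightarrow> real \<Rightarrow> real^'n^'n" where
  "Qmat p Q1 Q2 \<beta> = (1 + 1/\<beta>) powr (1/p) *\<^sub>R Q1 + (1 + \<beta>) powr (1/p) *\<^sub>R Q2"

end

theory Submission
  imports Defs
begin

lemma holder2:
  fixes u1 u2 v1 v2 al ga :: real
  assumes "u1>0" "u2>0" "v1>0" "v2>0" "al\<ge>0" "ga\<ge>0" "al+ga=1"
  shows "u1 powr al * v1 powr ga + u2 powr al * v2 powr ga \<le> (u1+u2) powr al * (v1+v2) powr ga"
proof -
  define U where "U = u1+u2"
  define V where "V = v1+v2"
  have U: "U>0" and V: "V>0" using assms by (auto simp: U_def V_def)
  have 1: "(u1/U) powr al * (v1/V) powr ga \<le> al*(u1/U) + ga*(v1/V)"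
    by (rule Youngs_inequality_0) (use assms U V in auto)
  have 2: "(u2/U) powr al * (v2/V) powr ga \<le> al*(u2/U) + ga*(v2/V)"
    by (rule Youngs_inequality_0) (use assms U V in auto)
  have e1: "al*(u1/U) + al*(u2/U) = al" using U unfolding U_def
    by (simp add: distrib_left[symmetric] add_divide_distrib[symmetric])
  have e2: "ga*(v1/V) + ga*(v2/V) = ga" using V unfolding V_def
    by (simp add: distrib_left[symmetric] add_divide_distrib[symmetric])
  have s: "al*(u1/U) + ga*(v1/V) + (al*(u2/U) + ga*(v2/V)) = 1"
    using e1 e2 assms(7) by linarith
  have "(u1 powr al * v1 powr ga + u2 powr al * v2 powr ga) / (U powr al * V powr ga) =
     (u1/U) powr al * (v1/V) powr ga + (u2/U) powr al * (v2/V) powr ga"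
    using assms U V by (simp add: powr_divide add_divide_distrib)
  also have "\<dots> \<le> 1" using 1 2 s by linarith
  finally have "(u1 powr al * v1 powr ga + u2 powr al * v2 powr ga) / (U powr al * V powr ga) \<le> 1" .
  moreover have "U powr al * V powr ga > 0" using U V by simp
  ultimately show ?thesis unfolding U_def V_def using assms by (simp add: divide_le_eq_1 split: if_splits)
qed

lemma scalar_min:
  fixes a b s c \<beta> :: real
  assumes "a>0" "b>0" "s>0" "\<beta>>0" "c = (a/b) powr (1/(1+s))"
  shows "a*(1+1/c) powr s + b*(1+c) powr s \<le> a*(1+1/\<beta>) powr s + b*(1+\<beta>) powr s"
proof -
  have cpos: "c>0" using assms by simp
  have ac: "a = b * c powr (1+s)" using assms
    by (simp add: powr_powr)
  have f: "a*(1+1/x) powr s + b*(1+x) powr s = b * ((1+x) powr s * (c powr (1+s) / x powr s + 1))"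
    if "x>0" for x
  proof -
    have "(1+1/x) = (1+x)/x" using that by (simp add: field_simps)
    hence "(1+1/x) powr s = (1+x) powr s / x powr s" using that by (simp add: powr_divide)
    thus ?thesis unfolding ac by (simp add: field_simps)
  qed
  have fc: "c powr (1+s) / c powr s + 1 = 1 + c" using cpos by (simp add: powr_add)
  have lhs: "a*(1+1/c) powr s + b*(1+c) powr s = b * (1+c) powr (1+s)"
    using f[OF cpos] fc cpos by (simp add: powr_add)
  define al where "al = s/(1+s)"
  define ga where "ga = 1/(1+s)"
  have h: "\<beta> powr al * (c powr (1+s) / \<beta> powr s) powr ga + 1 powr al * 1 powr ga
      \<le> (\<beta>+1) powr al * (c powr (1+s) / \<beta> powr s + 1) powr ga"
    by (rule holder2) (use assms cpos in \<open>auto simp: al_def ga_def field_simps\<close>)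
  have "(c powr (1+s) / \<beta> powr s) powr ga = c / \<beta> powr al"
  proof -
    have "(c powr (1+s)) powr ga = c" using cpos assms(3) by (simp add: powr_powr ga_def)
    moreover have "(\<beta> powr s) powr ga = \<beta> powr al" using assms(4) by (simp add: powr_powr ga_def al_def)
    ultimately show ?thesis using cpos assms(4) by (simp add: powr_divide)
  qed
  hence h2: "1 + c \<le> (1+\<beta>) powr al * (c powr (1+s) / \<beta> powr s + 1) powr ga"
    using h assms by (simp add: add.commute)
  have "(1+c) powr (1+s) \<le> ((1+\<beta>) powr al * (c powr (1+s) / \<beta> powr s + 1) powr ga) powr (1+s)"
    using h2 cpos assms by (intro powr_mono2) auto
  also have "\<dots> = (1+\<beta>) powr s * (c powr (1+s) / \<beta> powr s + 1)"
    using assms cpos by (simp add: powr_mult powr_powr al_def ga_def)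
  finally have "(1+c) powr (1+s) \<le> (1+\<beta>) powr s * (c powr (1+s) / \<beta> powr s + 1)" .
  thus ?thesis using lhs f[OF assms(4)] assms by simp
qed


lemma trace_pos:
  fixes A :: "real^'n^'n"
  assumes "sym_pos_def_mat A"
  shows "trace A > 0"
proof -
  have d: "A $ i $ i > 0" for i
  proof -
    have "axis i (1::real) \<noteq> 0" by (simp add: axis_eq_0_iff)
    hence "axis i 1 \<bullet> (A *v axis i 1) > 0" using assms unfolding sym_pos_def_mat_def by blast
    moreover have "axis i 1 \<bullet> (A *v axis i 1) = A $ i $ i"
    proof -
      have "A *v axis i 1 = (\<chi> k. A $ k $ i)" by (simp add: matrix_vector_mult_def axis_def if_distrib cong: if_cong)
      thus ?thesis by (simp add: inner_axis')
    qed
    ultimately show ?thesis by simp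
  qed
  show ?thesis unfolding trace_def by (rule sum_pos) (use d in auto)
qed

lemma trace_scaleR: "trace (c *\<^sub>R (A::real^'n^'n)) = c * trace A"
  unfolding trace_def by (simp add: sum_distrib_left)

theorem mainTheorem3:
  fixes Q1 Q2 :: "real^'n^'n" and p :: real
  assumes "p \<ge> 1" and "p \<noteq> 2"
    and "sym_pos_def_mat Q1" and "sym_pos_def_mat Q2"
  shows "(trace Q1 / trace Q2) powr (p / (1 + p)) > 0 \<and>
         (\<forall>\<beta>>0. trace (Qmat p Q1 Q2 ((trace Q1 / trace Q2) powr (p / (1 + p))))
                   \<le> trace (Qmat p Q1 Q2 \<beta>))"
proof -
  have a: "trace Q1 > 0" by (rule trace_pos[OF assms(3)])
  have b: "trace Q2 > 0" by (rule trace_pos[OF assms(4)])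
  have e: "p / (1 + p) = 1 / (1 + 1/p)" using assms(1) by (simp add: field_simps)
  have tr: "trace (Qmat p Q1 Q2 x) = trace Q1 * (1 + 1/x) powr (1/p) + trace Q2 * (1 + x) powr (1/p)" for x
    unfolding Qmat_def by (simp add: trace_add trace_scaleR mult.commute)
  show ?thesis
  proof (intro conjI allI impI)
    show "(trace Q1 / trace Q2) powr (p / (1 + p)) > 0" using a b by simp
    fix \<beta> :: real assume "\<beta> > 0"
    show "trace (Qmat p Q1 Q2 ((trace Q1 / trace Q2) powr (p / (1 + p)))) \<le> trace (Qmat p Q1 Q2 \<beta>)"
      unfolding tr e
      by (rule scalar_min) (use a b assms(1) \<open>\<beta> > 0\<close> in auto)
  qed
qed

end
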